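(* For every monotone submodular $f:2^{[2]}\to\mathbb{R}_+$ and every $\mathbf{x}\in[0,1]^2$, $f^{+}(\mathbf{x})/f^{++}(\mathbf{x})\le 4/3$ (with the convention $0/0=1$).
   Context: $[n]=\{1,\dots,n\}$. A set function $f:2^{[n]}\to\mathbb{R}_+$ is monotone if $f(S)\le f(T)$ for $S\subseteq T$, submodular if $f(S)+f(T)\ge f(S\cap T)+f(S\cup T)$. For $\mathbf{x}\in[0,1]^n$: the concave closure $f^{+}(\mathbf{x})=\max\sum_{S\subseteq[n]}\theta(S)f(S)$ over $\theta:2^{[n]}\to\mathbb{R}_{\ge0}$ with $\sum_S\theta(S)=1$ and $\sum_{S\ni i}\theta(S)=x_i$ for all $i$; the upper pairwise independent extension $f^{++}(\mathbf{x})$ is the same maximum with the additional constraints $\sum_{S\ni i,j}\theta(S)=x_ix_j$ for all $i<j$. *)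

theory Defs
  imports "HOL-Analysis.Analysis"
begin

text \<open>Ground set [n] = {1..n}; set functions are f :: nat set \<Rightarrow> real,
  only their values on subsets of {1..n} matter.\<close>

definition monotone_setfun :: "nat \<Rightarrow> (nat set \<Rightarrow> real) \<Rightarrow> bool" where
  "monotone_setfun n f \<longleftrightarrow>
     (\<forall>S T. S \<subseteq> T \<and> T \<subseteq> {1..n} \<longrightarrow> f S \<le> f T)"

definition submodular_setfun :: "nat \<Rightarrow> (nat set \<Rightarrow> real) \<Rightarrow> bool" where
  "submodular_setfun n f \<longleftrightarrow>
     (\<forall>S T. S \<subseteq> {1..n} \<and> T \<subseteq> {1..n} \<longrightarrow> f S + f T \<ge> f (S \<inter> T) + f (S \<union> T))"

definition nonneg_setfun :: "nat \<Rightarrow> (nat set \<Rightarrow> real) \<Rightarrow> bool" where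
  "nonneg_setfun n f \<longleftrightarrow> (\<forall>S. S \<subseteq> {1..n} \<longrightarrow> f S \<ge> 0)"

definition marg_feasible :: "nat \<Rightarrow> (nat \<Rightarrow> real) \<Rightarrow> (nat set \<Rightarrow> real) \<Rightarrow> bool" where
  "marg_feasible n x \<theta> \<longleftrightarrow>
     (\<forall>S\<in>Pow {1..n}. \<theta> S \<ge> 0) \<and>
     (\<Sum>S\<in>Pow {1..n}. \<theta> S) = 1 \<and>
     (\<forall>i\<in>{1..n}. (\<Sum>S\<in>{S\<in>Pow {1..n}. i \<in> S}. \<theta> S) = x i)"

definition pairwise_feasible :: "nat \<Rightarrow> (nat \<Rightarrow> real) \<Rightarrow> (nat set \<Rightarrow> real) \<Rightarrow> bool" where
  "pairwise_feasible n x \<theta> \<longleftrightarrow>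
     marg_feasible n x \<theta> \<and>
     (\<forall>i\<in>{1..n}. \<forall>j\<in>{1..n}. i < j \<longrightarrow>
        (\<Sum>S\<in>{S\<in>Pow {1..n}. i \<in> S \<and> j \<in> S}. \<theta> S) = x i * x j)"

text \<open>Concave closure f^+ (the maximum, written as a supremum; it is attained).\<close>
definition concave_closure :: "nat \<Rightarrow> (nat set \<Rightarrow> real) \<Rightarrow> (nat \<Rightarrow> real) \<Rightarrow> real" where
  "concave_closure n f x =
     Sup {(\<Sum>S\<in>Pow {1..n}. \<theta> S * f S) | \<theta>. marg_feasible n x \<theta>}"

definition upper_pi_ext :: "nat \<Rightarrow> (nat set \<Rightarrow> real) \<Rightarrow> (nat \<Rightarrow> real) \<Rightarrow> real" where
  "upper_pi_ext n f x =
     Sup {(\<Sum>S\<in>Pow {1..n}. \<theta> S * f S) | \<theta>. pairwise_feasible n x \<theta>}"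

end

theory Submission
  imports Defs
begin

lemma atl12: "{1..2::nat} = {1,2}" by auto

lemma pow12: "Pow {1..2::nat} = {{},{1},{2},{1,2}}"
  unfolding atl12 by (simp add: Pow_insert insert_commute)

lemma sum_pow12: "(\<Sum>S\<in>Pow {1..2::nat}. h S) = h {} + h {1} + h {2} + h {1,2}"
  unfolding pow12 by (simp add: add_ac)

lemma sum1: "(\<Sum>S\<in>{S\<in>Pow {1..2::nat}. 1 \<in> S}. h S) = h {1} + h {1,2}"
proof -
  have "{S\<in>Pow {1..2::nat}. 1 \<in> S} = {{1},{1,2}}" unfolding pow12 by auto
  thus ?thesis by simp
qed

lemma sum2: "(\<Sum>S\<in>{S\<in>Pow {1..2::nat}. 2 \<in> S}. h S) = h {2} + h {1,2}"
proof -
  have "{S\<in>Pow {1..2::nat}. 2 \<in> S} = {{2},{1,2}}" unfolding pow12 by auto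
  thus ?thesis by (simp add: insert_commute)
qed

lemma sum12: "(\<Sum>S\<in>{S\<in>Pow {1..2::nat}. 1 \<in> S \<and> 2 \<in> S}. h S) = h {1,2}"
proof -
  have "{S\<in>Pow {1..2::nat}. 1 \<in> S \<and> 2 \<in> S} = {{1,2}}" unfolding pow12 by auto
  thus ?thesis by simp
qed

lemma key:
  fixes a b c d x1 x2 f0 f1 f2 f12 :: real
  assumes "a \<ge> 0" "b \<ge> 0" "c \<ge> 0" "d \<ge> 0" "a+b+c+d = 1" "b + d = x1" "c + d = x2"
    "0 \<le> x1" "x1 \<le> 1" "0 \<le> x2" "x2 \<le> 1"
    "f0 \<ge> 0" "f0 \<le> f1" "f0 \<le> f2" "f1 \<le> f12" "f2 \<le> f12" "f12 + f0 \<le> f1 + f2"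
  shows "a*f0+b*f1+c*f2+d*f12 \<le> 4/3 * ((1-x1)*(1-x2)*f0 + x1*(1-x2)*f1 + (1-x1)*x2*f2 + x1*x2*f12)"
proof -
  define g where "g = f1 + f2 - f0 - f12"
  define L where "L = f0 + x1*(f1-f0) + x2*(f2-f0)"
  have g0: "g \<ge> 0" using assms g_def by simp
  have V: "a*f0+b*f1+c*f2+d*f12 = L - d*g"
  proof -
    have ha: "a = 1 - x1 - x2 + d" and hb: "b = x1 - d" and hc: "c = x2 - d" using assms by linarith+
    show ?thesis unfolding ha hb hc L_def g_def by (simp add: algebra_simps)
  qed
  have P: "(1-x1)*(1-x2)*f0 + x1*(1-x2)*f1 + (1-x1)*x2*f2 + x1*x2*f12 = L - x1*x2*g"
    unfolding L_def g_def by (simp add: algebra_simps)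
  have gle1: "g \<le> f1 - f0" "g \<le> f2 - f0" using assms g_def by auto
  have Lge: "L \<ge> (x1+x2)*g"
  proof -
    have "x1*g \<le> x1*(f1-f0)" using gle1 assms by (simp add: mult_left_mono)
    moreover have "x2*g \<le> x2*(f2-f0)" using gle1 assms by (simp add: mult_left_mono)
    ultimately show ?thesis using assms unfolding L_def by (simp add: algebra_simps)
  qed
  have L0: "L \<ge> 0" using Lge g0 assms by (smt (verit) mult_nonneg_nonneg)
  have dd: "d \<ge> x1 + x2 - 1" using assms by linarith
  have c1: "4*x1*x2 - 3*d \<le> x1 + x2"
  proof (cases "x1 + x2 \<le> 1")
    case True
    have e1: "(x1+x2)*(x1+x2) - 4*x1*x2 = (x1-x2)*(x1-x2)" by (simp add: algebra_simps)
    have "0 \<le> (x1-x2)*(x1-x2)" by simp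
    then have h1: "4*x1*x2 \<le> (x1+x2)*(x1+x2)" using e1 by linarith
    have "(x1+x2)*(x1+x2) \<le> 1*(x1+x2)" using True assms(8,10) by (intro mult_right_mono) auto
    then show ?thesis using h1 assms(4) by simp
  next
    case False
    have e1: "((1-x1)+(1-x2))*((1-x1)+(1-x2)) - 4*(1-x1)*(1-x2) = (x1-x2)*(x1-x2)" by (simp add: algebra_simps)
    have "0 \<le> (x1-x2)*(x1-x2)" by simp
    then have h1: "4*(1-x1)*(1-x2) \<le> ((1-x1)+(1-x2))*((1-x1)+(1-x2))" using e1 by linarith
    have "((1-x1)+(1-x2))*((1-x1)+(1-x2)) \<le> 1*((1-x1)+(1-x2))"
      using False assms(9,11) by (intro mult_right_mono) auto
    then have h2: "((1-x1)+(1-x2))*((1-x1)+(1-x2)) \<le> (1-x1)+(1-x2)" by simp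
    have "4*(1-x1)*(1-x2) \<le> 1" using order_trans[OF h1 h2] False by linarith
    then have "4*x1*x2 - 4*x1 - 4*x2 + 3 \<le> 0" by (simp add: algebra_simps)
    then show ?thesis using dd by linarith
  qed
  have "(4*x1*x2 - 3*d) * g \<le> L"
  proof (cases "4*x1*x2 - 3*d \<le> 0")
    case True
    then have "(4*x1*x2 - 3*d) * g \<le> 0" using g0 by (simp add: mult_nonpos_nonneg)
    then show ?thesis using L0 by linarith
  next
    case False
    have "(4*x1*x2 - 3*d) * g \<le> (x1+x2)*g" using c1 g0 by (simp add: mult_right_mono)
    then show ?thesis using Lge by linarith
  qed
  then show ?thesis unfolding V P by (simp add: algebra_simps)
qed

lemma marg2:
  assumes "marg_feasible 2 x \<theta>"
  shows "\<theta> {} + \<theta> {1} + \<theta> {2} + \<theta> {1,2} = 1" "\<theta> {1} + \<theta> {1,2} = x 1"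
    "\<theta> {2} + \<theta> {1,2} = x 2"
    "\<theta> {} \<ge> 0" "\<theta> {1} \<ge> 0" "\<theta> {2} \<ge> 0" "\<theta> {1,2} \<ge> 0"
proof -
  have A: "\<forall>S\<in>Pow {1..2::nat}. \<theta> S \<ge> 0" "(\<Sum>S\<in>Pow {1..2::nat}. \<theta> S) = 1"
    "\<forall>i\<in>{1..2::nat}. (\<Sum>S\<in>{S\<in>Pow {1..2::nat}. i \<in> S}. \<theta> S) = x i"
    using assms unfolding marg_feasible_def by blast+
  have i: "(1::nat) \<in> {1..2}" "(2::nat) \<in> {1..2}" by auto
  have B1: "(\<Sum>S\<in>{S\<in>Pow {1..2::nat}. 1 \<in> S}. \<theta> S) = x 1" using bspec[OF A(3) i(1)] .
  have B2: "(\<Sum>S\<in>{S\<in>Pow {1..2::nat}. 2 \<in> S}. \<theta> S) = x 2" using bspec[OF A(3) i(2)] .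
  show "\<theta> {} + \<theta> {1} + \<theta> {2} + \<theta> {1,2} = 1" using A(2) unfolding sum_pow12 .
  show "\<theta> {1} + \<theta> {1,2} = x 1" using B1 unfolding sum1 .
  show "\<theta> {2} + \<theta> {1,2} = x 2" using B2 unfolding sum2 .
  show "\<theta> {} \<ge> 0" "\<theta> {1} \<ge> 0" "\<theta> {2} \<ge> 0" "\<theta> {1,2} \<ge> 0"
    using A(1) unfolding pow12 by auto
qed

lemma pair2:
  assumes "pairwise_feasible 2 x \<theta>"
  shows "\<theta> {1,2} = x 1 * x 2"
proof -
  have A: "\<forall>i\<in>{1..2::nat}. \<forall>j\<in>{1..2::nat}. i < j \<longrightarrow>
        (\<Sum>S\<in>{S\<in>Pow {1..2::nat}. i \<in> S \<and> j \<in> S}. \<theta> S) = x i * x j"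
    using assms unfolding pairwise_feasible_def by blast
  have i: "(1::nat) \<in> {1..2}" "(2::nat) \<in> {1..2}" "(1::nat) < 2" by auto
  have "(\<Sum>S\<in>{S\<in>Pow {1..2::nat}. 1 \<in> S \<and> 2 \<in> S}. \<theta> S) = x 1 * x 2"
    using A i by blast
  then show ?thesis unfolding sum12 .
qed

theorem mainTheorem4:
  fixes f :: "nat set \<Rightarrow> real" and x :: "nat \<Rightarrow> real"
  assumes "nonneg_setfun 2 f" and "monotone_setfun 2 f" and "submodular_setfun 2 f"
    and "\<forall>i\<in>{1..2::nat}. 0 \<le> x i \<and> x i \<le> 1"
  shows "concave_closure 2 f x \<le> 4/3 * upper_pi_ext 2 f x"
proof -
  have x: "0 \<le> x 1" "x 1 \<le> 1" "0 \<le> x 2" "x 2 \<le> 1" using assms(4) by auto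
  have f0: "f {} \<ge> 0" using assms(1) unfolding nonneg_setfun_def by auto
  have m: "f {} \<le> f {1}" "f {} \<le> f {2}" "f {1} \<le> f {1,2}" "f {2} \<le> f {1,2}"
    using assms(2) unfolding monotone_setfun_def by auto
  have s: "f {1,2} + f {} \<le> f {1} + f {2}"
  proof -
    have sm: "\<forall>S T. S \<subseteq> {1..2} \<and> T \<subseteq> {1..2} \<longrightarrow> f S + f T \<ge> f (S \<inter> T) + f (S \<union> T)"
      using assms(3) unfolding submodular_setfun_def by blast
    have "{1::nat} \<subseteq> {1..2}" "{2::nat} \<subseteq> {1..2}" by auto
    then have "f {1} + f {2} \<ge> f ({1}\<inter>{2}) + f ({1}\<union>{2})"
      using sm by blast
    then show ?thesis by (simp add: insert_commute)
  qed
  define P where "P = (1-x 1)*(1-x 2)*f {} + x 1*(1-x 2)*f {1} + (1-x 1)*x 2*f {2} + x 1*x 2*f {1,2}"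
  define t0 :: "nat set \<Rightarrow> real" where
    "t0 = (\<lambda>S. if S = {} then (1-x 1)*(1-x 2) else if S = {1} then x 1*(1-x 2)
            else if S = {2} then (1-x 1)*x 2 else x 1*x 2)"
  have nn: "0 \<le> (1-x 1)*(1-x 2)" "0 \<le> x 1*(1-x 2)" "0 \<le> (1-x 1)*x 2" "0 \<le> x 1*x 2"
    using x by (simp_all add: mult_nonneg_nonneg)
  have t0m: "marg_feasible 2 x t0"
    unfolding marg_feasible_def
  proof (intro conjI)
    show "\<forall>S\<in>Pow {1..2}. 0 \<le> t0 S" unfolding pow12 t0_def using nn by auto
    show "(\<Sum>S\<in>Pow {1..2}. t0 S) = 1" unfolding sum_pow12 t0_def by (simp add: algebra_simps)
    have "(\<Sum>S\<in>{S\<in>Pow {1..2}. 1 \<in> S}. t0 S) = x 1" unfolding sum1 t0_def by (simp add: algebra_simps)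
    moreover have "(\<Sum>S\<in>{S\<in>Pow {1..2}. 2 \<in> S}. t0 S) = x 2" unfolding sum2 t0_def by (simp add: algebra_simps)
    ultimately show "\<forall>i\<in>{1..2}. (\<Sum>S\<in>{S\<in>Pow {1..2}. i \<in> S}. t0 S) = x i"
      unfolding atl12 by auto
  qed
  have t0p: "pairwise_feasible 2 x t0"
  proof -
    have "(\<Sum>S\<in>{S\<in>Pow {1..2}. 1 \<in> S \<and> 2 \<in> S}. t0 S) = x 1 * x 2" unfolding sum12 t0_def by simp
    then show ?thesis unfolding pairwise_feasible_def using t0m unfolding atl12 by auto
  qed
  have up: "{(\<Sum>S\<in>Pow {1..2}. \<theta> S * f S) | \<theta>. pairwise_feasible 2 x \<theta>} = {P}"
  proof (intro equalityI subsetI)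
    fix v assume "v \<in> {(\<Sum>S\<in>Pow {1..2}. \<theta> S * f S) | \<theta>. pairwise_feasible 2 x \<theta>}"
    then obtain \<theta> where v: "v = (\<Sum>S\<in>Pow {1..2}. \<theta> S * f S)" and pf: "pairwise_feasible 2 x \<theta>"
      by auto
    have pm: "marg_feasible 2 x \<theta>" using pf unfolding pairwise_feasible_def by blast
    have e: "\<theta> {} + \<theta> {1} + \<theta> {2} + \<theta> {1,2} = 1" "\<theta> {1} + \<theta> {1,2} = x 1"
      "\<theta> {2} + \<theta> {1,2} = x 2" "\<theta> {1,2} = x 1 * x 2"
      using marg2[OF pm] pair2[OF pf] by auto
    have "\<theta> {1} = x 1 * (1 - x 2)" "\<theta> {2} = (1 - x 1) * x 2" "\<theta> {} = (1-x 1)*(1-x 2)"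
      using e by (simp_all add: algebra_simps)
    then show "v \<in> {P}" unfolding v sum_pow12 P_def using e by simp
  next
    fix v assume "v \<in> {P}"
    then have "v = (\<Sum>S\<in>Pow {1..2}. t0 S * f S)"
      unfolding sum_pow12 P_def t0_def by auto
    then show "v \<in> {(\<Sum>S\<in>Pow {1..2}. \<theta> S * f S) | \<theta>. pairwise_feasible 2 x \<theta>}"
      using t0p by blast
  qed
  have U: "upper_pi_ext 2 f x = P" unfolding upper_pi_ext_def up by simp
  have "concave_closure 2 f x \<le> 4/3 * P"
    unfolding concave_closure_def
  proof (rule cSup_least)
    show "{(\<Sum>S\<in>Pow {1..2}. \<theta> S * f S) | \<theta>. marg_feasible 2 x \<theta>} \<noteq> {}" using t0m by blast
  next
    fix v assume "v \<in> {(\<Sum>S\<in>Pow {1..2}. \<theta> S * f S) | \<theta>. marg_feasible 2 x \<theta>}"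
    then obtain \<theta> where v: "v = (\<Sum>S\<in>Pow {1..2}. \<theta> S * f S)" and pf: "marg_feasible 2 x \<theta>"
      by auto
    note e = marg2[OF pf]
    show "v \<le> 4/3 * P" unfolding v sum_pow12 P_def
      using key[OF e(4-7) e(1-3) x f0 m s] by (simp add: algebra_simps)
  qed
  then show ?thesis using U by simp
qed

end
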